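(* Let $X\times G\xrightarrow{\alpha}X$ be a continuous right action of a locally compact Hausdorff group $G$ on a Hausdorff space $X$, and let $H\le G$ be a closed cocompact subgroup (i.e. $G/H$ is compact), with restricted action $\alpha^H$. Then for any closed $F\subseteq X$, $\alpha$ is $F$-proper if and only if $\alpha^H$ is $F$-proper; likewise $\alpha$ is Bourbaki-proper (respectively Palais-proper) if and only if $\alpha^H$ is.
   Context: For $A,B\subseteq X$ set $\langle A:B\rangle_\alpha:=\{g\in G: Bg\cap A\neq\emptyset\}$, and write $A\perp B$ if this set is relatively compact in $G$. The action is Bourbaki-proper if for all $x,x'\in X$ there are neighborhoods $V_x\ni x$, $V_{x'}\ni x'$ with $V_{x'}\perp V_x$. It is Palais-proper if for every $x\in X$ there is a neighborhood $V_x$ such that for every $x'\in X$ there is a neighborhood $V_{x'}$ with $V_x\perp V_{x'}$. For a closed $F\subseteq X$, the action is $F$-proper if for every $x\in X$ there are neighborhoods $V_x\ni x$ and $V_F\supseteq F$ (an open set containing $F$) with $V_F\perp V_x$. *)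

theory Defs
  imports "HOL-Analysis.Analysis"
begin

text \<open>The group G is a type of class topological_group_add (written additively,
not necessarily commutative).
Subgroups are handled via a carrier set S of group elements; the whole group is S = UNIV.\<close>

definition right_action :: "('x \<Rightarrow> 'g::group_add \<Rightarrow> 'x) \<Rightarrow> bool" where
  "right_action \<alpha> \<longleftrightarrow> (\<forall>x. \<alpha> x 0 = x) \<and> (\<forall>x g h. \<alpha> (\<alpha> x g) h = \<alpha> x (g + h))"

definition closed_subgroup :: "'g::topological_group_add set \<Rightarrow> bool" where
  "closed_subgroup H \<longleftrightarrow> 0 \<in> H \<and> (\<forall>g\<in>H. \<forall>h\<in>H. g + h \<in> H) \<and> (\<forall>g\<in>H. - g \<in> H) \<and> closed H"

definition cocompact :: "'g::topological_group_add set \<Rightarrow> bool" where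
  "cocompact H \<longleftrightarrow> (\<exists>Q :: 'g set topology.
      quotient_map (euclidean :: 'g topology) Q (\<lambda>g. (\<lambda>h. g + h) ` H) \<and> compact_space Q)"

definition transporter :: "'g set \<Rightarrow> ('x \<Rightarrow> 'g \<Rightarrow> 'x) \<Rightarrow> 'x set \<Rightarrow> 'x set \<Rightarrow> 'g set" where
  "transporter S \<alpha> A B = {g \<in> S. (\<lambda>b. \<alpha> b g) ` B \<inter> A \<noteq> {}}"

definition perp :: "'g::topological_space set \<Rightarrow> ('x \<Rightarrow> 'g \<Rightarrow> 'x) \<Rightarrow> 'x set \<Rightarrow> 'x set \<Rightarrow> bool" where
  "perp S \<alpha> A B \<longleftrightarrow> compact (S \<inter> closure (transporter S \<alpha> A B))"

definition F_proper :: "'g::topological_space set \<Rightarrow> ('x::topological_space \<Rightarrow> 'g \<Rightarrow> 'x) \<Rightarrow> 'x set \<Rightarrow> bool" where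
  "F_proper S \<alpha> F \<longleftrightarrow> (\<forall>x. \<exists>Vx VF. open Vx \<and> x \<in> Vx \<and> open VF \<and> F \<subseteq> VF \<and> perp S \<alpha> VF Vx)"

definition bourbaki_proper :: "'g::topological_space set \<Rightarrow> ('x::topological_space \<Rightarrow> 'g \<Rightarrow> 'x) \<Rightarrow> bool" where
  "bourbaki_proper S \<alpha> \<longleftrightarrow> (\<forall>x x'. \<exists>Vx Vx'. open Vx \<and> x \<in> Vx \<and> open Vx' \<and> x' \<in> Vx' \<and> perp S \<alpha> Vx' Vx)"

definition palais_proper :: "'g::topological_space set \<Rightarrow> ('x::topological_space \<Rightarrow> 'g \<Rightarrow> 'x) \<Rightarrow> bool" where
  "palais_proper S \<alpha> \<longleftrightarrow> (\<forall>x. \<exists>Vx. open Vx \<and> x \<in> Vx \<and>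
      (\<forall>x'. \<exists>Vx'. open Vx' \<and> x' \<in> Vx' \<and> perp S \<alpha> Vx Vx'))"

end

theory Submission
  imports Defs
begin

lemma perp_mono:
  assumes "closed S" "perp S \<alpha> A B" "A' \<subseteq> A" "B' \<subseteq> B"
  shows "perp S \<alpha> A' B'"
proof -
  have T: "transporter S \<alpha> A' B' \<subseteq> transporter S \<alpha> A B"
    using assms(3,4) unfolding transporter_def by blast
  have "S \<inter> closure (transporter S \<alpha> A' B') =
      (S \<inter> closure (transporter S \<alpha> A B)) \<inter> (S \<inter> closure (transporter S \<alpha> A' B'))"
    using closure_mono[OF T] by blast
  moreover have "compact ((S \<inter> closure (transporter S \<alpha> A B)) \<inter> (S \<inter> closure (transporter S \<alpha> A' B')))"
    using assms(1,2) unfolding perp_def by (meson compact_Int_closed closed_Int closed_closure)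
  ultimately show ?thesis unfolding perp_def by simp
qed

lemma perp_UNIV_H:
  assumes "closed H" "perp UNIV \<alpha> A B"
  shows "perp H \<alpha> A B"
proof -
  have T: "transporter H \<alpha> A B \<subseteq> transporter UNIV \<alpha> A B"
    unfolding transporter_def by blast
  have "H \<inter> closure (transporter H \<alpha> A B) =
      (UNIV \<inter> closure (transporter UNIV \<alpha> A B)) \<inter> (H \<inter> closure (transporter H \<alpha> A B))"
    using closure_mono[OF T] by blast
  moreover have "compact ((UNIV \<inter> closure (transporter UNIV \<alpha> A B)) \<inter> (H \<inter> closure (transporter H \<alpha> A B)))"
    using assms unfolding perp_def by (meson compact_Int_closed closed_Int closed_closure)
  ultimately show ?thesis unfolding perp_def by simp
qed

lemma coset_eq:
  fixes H :: "'g::topological_group_add set"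
  assumes "closed_subgroup H"
  shows "((+) g ` H = (+) u ` H) \<longleftrightarrow> (\<exists>h\<in>H. g = u + h)"
proof
  assume "(+) g ` H = (+) u ` H"
  moreover have "g \<in> (+) g ` H" using assms unfolding closed_subgroup_def
    by (metis add.right_neutral image_eqI)
  ultimately show "\<exists>h\<in>H. g = u + h" by auto
next
  assume "\<exists>h\<in>H. g = u + h"
  then obtain h where h: "h \<in> H" "g = u + h" by blast
  show "(+) g ` H = (+) u ` H"
  proof
    show "(+) g ` H \<subseteq> (+) u ` H"
    proof
      fix z assume "z \<in> (+) g ` H"
      then obtain h' where "h' \<in> H" "z = g + h'" by blast
      then have "z = u + (h + h')" "h + h' \<in> H" using h assms
        by (auto simp: add.assoc closed_subgroup_def)
      then show "z \<in> (+) u ` H" by blast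
    qed
    show "(+) u ` H \<subseteq> (+) g ` H"
    proof
      fix z assume "z \<in> (+) u ` H"
      then obtain h' where "h' \<in> H" "z = u + h'" by blast
      then have "z = g + (- h + h')" "- h + h' \<in> H" using h assms
        by (auto simp: add.assoc closed_subgroup_def)
      then show "z \<in> (+) g ` H" by blast
    qed
  qed
qed

lemma cover_K:
  fixes H :: "'g::{topological_group_add, t2_space} set"
  assumes lc: "locally_compact_space (euclidean :: 'g topology)"
    and sg: "closed_subgroup H" and cc: "cocompact H"
  shows "\<exists>K. compact K \<and> (\<forall>g. \<exists>k\<in>K. \<exists>h\<in>H. g = k + h)"
proof -
  define p where "p = (\<lambda>g::'g. (\<lambda>h. g + h) ` H)"
  obtain Q where Q: "quotient_map (euclidean :: 'g topology) Q p" "compact_space Q"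
    using cc unfolding cocompact_def p_def by blast
  have "\<exists>U C. open U \<and> compact C \<and> g \<in> U \<and> U \<subseteq> C" for g :: 'g
  proof -
    have "\<exists>U C. openin euclidean U \<and> compactin euclidean C \<and> g \<in> U \<and> U \<subseteq> C"
      using lc unfolding locally_compact_space_def topspace_euclidean by (rule bspec) simp
    then obtain U C where "openin euclidean U" "compactin euclidean C" "g \<in> U" "U \<subseteq> C"
      by blast
    then show ?thesis by (intro exI[of _ U] exI[of _ C]) auto
  qed
  then obtain Uf Cf where UC: "\<And>g::'g. open (Uf g) \<and> compact (Cf g) \<and> g \<in> Uf g \<and> Uf g \<subseteq> Cf g"
    by metis
  have top: "topspace Q = p ` UNIV" using Q(1) unfolding quotient_map_def by simp
  have op: "openin Q (p ` Uf g)" for g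
  proof -
    have eq: "{x. p x \<in> p ` Uf g} = (\<Union>h\<in>H. (\<lambda>z. z + - h) -` Uf g)"
    proof -
      have "p x \<in> p ` Uf g \<longleftrightarrow> (\<exists>h\<in>H. x + - h \<in> Uf g)" for x
      proof
        assume "p x \<in> p ` Uf g"
        then obtain u where "u \<in> Uf g" "p x = p u" by auto
        then obtain h where "h \<in> H" "x = u + h" using coset_eq[OF sg] unfolding p_def by blast
        then show "\<exists>h\<in>H. x + - h \<in> Uf g" using \<open>u \<in> Uf g\<close>
          by (intro bexI[of _ h]) (simp_all add: add.assoc)
      next
        assume "\<exists>h\<in>H. x + - h \<in> Uf g"
        then obtain h where "h \<in> H" "x + - h \<in> Uf g" by blast
        moreover have "x = (x + - h) + h" by (simp add: add.assoc)
        ultimately have "p x = p (x + - h)" using coset_eq[OF sg] unfolding p_def by blast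
        then show "p x \<in> p ` Uf g" using \<open>x + - h \<in> Uf g\<close> by blast
      qed
      then show ?thesis by auto
    qed
    have "open ((\<lambda>z. z + - h) -` Uf g)" for h
    proof -
      have "continuous_on UNIV (\<lambda>z::'g. z + - h)" by (intro continuous_intros)
      then show ?thesis using continuous_on_open_vimage[of UNIV "\<lambda>z::'g. z + - h"] UC by auto
    qed
    then have "open {x. p x \<in> p ` Uf g}" unfolding eq by blast
    moreover have "p ` Uf g \<subseteq> topspace Q" using top by auto
    moreover have "{x. p x \<in> p ` Uf g} = {x \<in> topspace euclidean. p x \<in> p ` Uf g}" by simp
    ultimately show ?thesis using Q(1) unfolding quotient_map_def by (metis open_openin)
  qed
  define R where "R = (\<lambda>g. p ` Uf g) ` UNIV"
  have cov: "topspace Q \<subseteq> \<Union>R"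
  proof
    fix q assume "q \<in> topspace Q"
    then obtain g where "q = p g" using top by auto
    then have "q \<in> p ` Uf g" using UC[of g] by blast
    then show "q \<in> \<Union>R" unfolding R_def by blast
  qed
  have opR: "\<forall>U\<in>R. openin Q U" unfolding R_def using op by blast
  have "\<forall>\<U>. (\<forall>U\<in>\<U>. openin Q U) \<and> topspace Q \<subseteq> \<Union>\<U> \<longrightarrow>
      (\<exists>\<F>. finite \<F> \<and> \<F> \<subseteq> \<U> \<and> topspace Q \<subseteq> \<Union>\<F>)"
    using Q(2) unfolding compact_space_def compactin_def by (rule conjunct2)
  then have "(\<forall>U\<in>R. openin Q U) \<and> topspace Q \<subseteq> \<Union>R \<longrightarrow>
      (\<exists>\<F>. finite \<F> \<and> \<F> \<subseteq> R \<and> topspace Q \<subseteq> \<Union>\<F>)"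
    by (rule spec)
  then have "\<exists>\<F>. finite \<F> \<and> \<F> \<subseteq> R \<and> topspace Q \<subseteq> \<Union>\<F>"
    using opR cov by (rule mp[OF _ conjI])
  then obtain \<F> where F: "finite \<F>" "\<F> \<subseteq> (\<lambda>g. p ` Uf g) ` UNIV" "topspace Q \<subseteq> \<Union>\<F>"
    unfolding R_def by (elim exE conjE)
  obtain E where E: "finite E" "\<F> = (\<lambda>g. p ` Uf g) ` E"
    using finite_subset_image[OF F(1) F(2)] by blast
  define K where "K = (\<Union>e\<in>E. Cf e)"
  have "compact K" unfolding K_def using E(1) UC by (intro compact_UN) auto
  moreover have "\<exists>k\<in>K. \<exists>h\<in>H. g = k + h" for g
  proof -
    have "p g \<in> topspace Q" using top by auto
    then obtain e where "e \<in> E" "p g \<in> p ` Uf e" using F(3) E(2) by auto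
    then obtain u where u: "u \<in> Uf e" "p g = p u" by auto
    then obtain h where "h \<in> H" "g = u + h" using coset_eq[OF sg] unfolding p_def by blast
    moreover have "u \<in> K" using u(1) UC \<open>e \<in> E\<close> unfolding K_def by blast
    ultimately show ?thesis by blast
  qed
  ultimately show ?thesis by blast
qed

lemma core:
  fixes \<alpha> :: "'x::topological_space \<Rightarrow> 'g::{topological_group_add, t2_space} \<Rightarrow> 'x"
  assumes act: "right_action \<alpha>" and cont: "continuous_on UNIV (\<lambda>p. \<alpha> (fst p) (snd p))"
    and Kc: "compact K" and cov: "\<forall>g. \<exists>k\<in>K. \<exists>h\<in>H. g = k + h"
    and hyp: "\<forall>y. \<exists>V U. open V \<and> y \<in> V \<and> open U \<and> F \<subseteq> U \<and> perp H \<alpha> U V"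
  shows "\<exists>V U. open V \<and> x \<in> V \<and> open U \<and> F \<subseteq> U \<and> perp UNIV \<alpha> U V"
proof -
  obtain Vf Uf where VU: "\<And>y. open (Vf y) \<and> y \<in> Vf y \<and> open (Uf y) \<and> F \<subseteq> Uf y \<and> perp H \<alpha> (Uf y) (Vf y)"
  proof -
    have "\<exists>Vf Uf. \<forall>y. open (Vf y) \<and> y \<in> Vf y \<and> open (Uf y) \<and> F \<subseteq> Uf y \<and> perp H \<alpha> (Uf y) (Vf y)"
      using hyp by (subst choice_iff[symmetric])+ blast
    then show ?thesis using that by blast
  qed
  have "continuous_on K (\<alpha> x)"
  proof -
    have "continuous_on K (\<lambda>k. (x, k))" by (intro continuous_intros)
    from continuous_on_compose2[OF cont this] show ?thesis by simp
  qed
  then have "compact (\<alpha> x ` K)" using Kc by (rule compact_continuous_image)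
  then obtain D where D: "D \<subseteq> \<alpha> x ` K" "finite D" "\<alpha> x ` K \<subseteq> (\<Union>y\<in>D. Vf y)"
    by (rule compactE_image[where C="\<alpha> x ` K" and f=Vf]) (use VU in auto)
  define W where "W = (\<Union>y\<in>D. Vf y)"
  define UU where "UU = (\<Inter>y\<in>D. Uf y)"
  have "open W" unfolding W_def by (rule open_UN) (use VU in blast)
  have "open UU" unfolding UU_def by (rule open_INT[OF D(2)]) (use VU in blast)
  have "F \<subseteq> UU" unfolding UU_def using VU by blast
  have "open ((\<lambda>p. \<alpha> (fst p) (snd p)) -` W)"
    using continuous_on_open_vimage[of UNIV "\<lambda>p. \<alpha> (fst p) (snd p)"] cont \<open>open W\<close> by simp
  moreover have "{x} \<times> K \<subseteq> (\<lambda>p. \<alpha> (fst p) (snd p)) -` W"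
  proof
    fix q assume "q \<in> {x} \<times> K"
    then have "\<alpha> (fst q) (snd q) \<in> \<alpha> x ` K" by auto
    then show "q \<in> (\<lambda>p. \<alpha> (fst p) (snd p)) -` W" using D(3) unfolding W_def by blast
  qed
  ultimately obtain X0 where X0: "x \<in> X0" "open X0" "X0 \<times> K \<subseteq> (\<lambda>p. \<alpha> (fst p) (snd p)) -` W"
    using Elementary_Topology.tube_lemma[OF Kc] by blast
  define T where "T y = transporter H \<alpha> (Uf y) (Vf y)" for y
  define L where "L = closure (transporter H \<alpha> UU W)"
  have TH: "transporter H \<alpha> UU W \<subseteq> (\<Union>y\<in>D. H \<inter> closure (T y))"
  proof
    fix g assume "g \<in> transporter H \<alpha> UU W"
    then obtain b where b: "g \<in> H" "b \<in> W" "\<alpha> b g \<in> UU" unfolding transporter_def by blast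
    then obtain y where y: "y \<in> D" "b \<in> Vf y" unfolding W_def by blast
    then have "\<alpha> b g \<in> Uf y" using b(3) unfolding UU_def by blast
    then have "g \<in> T y" using b(1) y(2) unfolding T_def transporter_def by blast
    then show "g \<in> (\<Union>y\<in>D. H \<inter> closure (T y))" using y(1) b(1) closure_subset by blast
  qed
  have cU: "compact (\<Union>y\<in>D. H \<inter> closure (T y))"
    using D(2) VU unfolding T_def perp_def by (intro compact_UN) auto
  then have "L \<subseteq> (\<Union>y\<in>D. H \<inter> closure (T y))"
    unfolding L_def using TH by (intro closure_minimal compact_imp_closed)
  then have "L = (\<Union>y\<in>D. H \<inter> closure (T y)) \<inter> L" by blast
  then have "compact L" using cU unfolding L_def by (metis closed_closure compact_Int_closed)
  define M where "M = (\<lambda>p. fst p + snd p) ` (K \<times> L)"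
  have "compact M" unfolding M_def
    by (intro compact_continuous_image compact_Times Kc \<open>compact L\<close> continuous_intros)
  have sub: "transporter UNIV \<alpha> UU X0 \<subseteq> M"
  proof
    fix g assume "g \<in> transporter UNIV \<alpha> UU X0"
    then obtain b where b: "b \<in> X0" "\<alpha> b g \<in> UU" unfolding transporter_def by blast
    obtain k h where kh: "k \<in> K" "h \<in> H" "g = k + h" using cov by blast
    have "\<alpha> b k \<in> W" using X0(3) b(1) kh(1) by auto
    moreover have "\<alpha> (\<alpha> b k) h \<in> UU" using b(2) act kh(3) unfolding right_action_def by simp
    ultimately have "h \<in> transporter H \<alpha> UU W" using kh(2) unfolding transporter_def by blast
    then have "h \<in> L" unfolding L_def using closure_subset by blast
    then show "g \<in> M" unfolding M_def using kh by force
  qed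
  have "closure (transporter UNIV \<alpha> UU X0) \<subseteq> M"
    using sub \<open>compact M\<close> by (intro closure_minimal compact_imp_closed)
  then have "UNIV \<inter> closure (transporter UNIV \<alpha> UU X0) = M \<inter> closure (transporter UNIV \<alpha> UU X0)" by blast
  then have "perp UNIV \<alpha> UU X0" unfolding perp_def using \<open>compact M\<close>
    by (metis closed_closure compact_Int_closed)
  then show ?thesis using X0 \<open>open UU\<close> \<open>F \<subseteq> UU\<close> by blast
qed

theorem lemma2p5:
  fixes \<alpha> :: "'x::t2_space \<Rightarrow> 'g::{topological_group_add, t2_space} \<Rightarrow> 'x"
    and H :: "'g set"
  assumes "locally_compact_space (euclidean :: 'g topology)"
    and "right_action \<alpha>"
    and "continuous_on UNIV (\<lambda>p. \<alpha> (fst p) (snd p))"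
    and "closed_subgroup H"
    and "cocompact H"
  shows "(\<forall>F. closed F \<longrightarrow> (F_proper UNIV \<alpha> F \<longleftrightarrow> F_proper H \<alpha> F))
    \<and> (bourbaki_proper UNIV \<alpha> \<longleftrightarrow> bourbaki_proper H \<alpha>)
    \<and> (palais_proper UNIV \<alpha> \<longleftrightarrow> palais_proper H \<alpha>)"
proof -
  have Hc: "closed H" using assms(4) unfolding closed_subgroup_def by blast
  obtain K where Kc: "compact K" and cov: "\<forall>g. \<exists>k\<in>K. \<exists>h\<in>H. g = k + h"
    using cover_K[OF assms(1,4,5)] by blast
  note cr = core[OF assms(2,3) Kc cov]
  have A: "F_proper UNIV \<alpha> F \<longleftrightarrow> F_proper H \<alpha> F" for F
  proof
    assume a: "F_proper UNIV \<alpha> F"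
    show "F_proper H \<alpha> F" unfolding F_proper_def
    proof
      fix x
      obtain Vx VF where "open Vx" "x \<in> Vx" "open VF" "F \<subseteq> VF" "perp UNIV \<alpha> VF Vx"
        using a unfolding F_proper_def by blast
      then show "\<exists>Vx VF. open Vx \<and> x \<in> Vx \<and> open VF \<and> F \<subseteq> VF \<and> perp H \<alpha> VF Vx"
        using perp_UNIV_H[OF Hc] by blast
    qed
  next
    assume "F_proper H \<alpha> F"
    then have "\<forall>y. \<exists>V U. open V \<and> y \<in> V \<and> open U \<and> F \<subseteq> U \<and> perp H \<alpha> U V"
      unfolding F_proper_def by blast
    then show "F_proper UNIV \<alpha> F" unfolding F_proper_def using cr by (intro allI) blast
  qed
  have B: "bourbaki_proper UNIV \<alpha> \<longleftrightarrow> bourbaki_proper H \<alpha>"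
  proof
    assume a: "bourbaki_proper UNIV \<alpha>"
    show "bourbaki_proper H \<alpha>" unfolding bourbaki_proper_def
    proof (intro allI)
      fix x x'
      obtain Vx Vx' where "open Vx" "x \<in> Vx" "open Vx'" "x' \<in> Vx'" "perp UNIV \<alpha> Vx' Vx"
        using a unfolding bourbaki_proper_def by blast
      then show "\<exists>Vx Vx'. open Vx \<and> x \<in> Vx \<and> open Vx' \<and> x' \<in> Vx' \<and> perp H \<alpha> Vx' Vx"
        using perp_UNIV_H[OF Hc] by blast
    qed
  next
    assume b: "bourbaki_proper H \<alpha>"
    show "bourbaki_proper UNIV \<alpha>" unfolding bourbaki_proper_def
    proof (intro allI)
      fix x x'
      have "\<forall>y. \<exists>V U. open V \<and> y \<in> V \<and> open U \<and> {x'} \<subseteq> U \<and> perp H \<alpha> U V"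
      proof
        fix y
        obtain V U where "open V" "y \<in> V" "open U" "x' \<in> U" "perp H \<alpha> U V"
          using b unfolding bourbaki_proper_def by blast
        then show "\<exists>V U. open V \<and> y \<in> V \<and> open U \<and> {x'} \<subseteq> U \<and> perp H \<alpha> U V"
          by (intro exI[of _ V] exI[of _ U]) simp
      qed
      from cr[OF this, of x] obtain V U where "open V" "x \<in> V" "open U" "{x'} \<subseteq> U" "perp UNIV \<alpha> U V"
        by blast
      then show "\<exists>Vx Vx'. open Vx \<and> x \<in> Vx \<and> open Vx' \<and> x' \<in> Vx' \<and> perp UNIV \<alpha> Vx' Vx"
        by (intro exI[of _ V] exI[of _ U]) simp
    qed
  qed
  have C: "palais_proper UNIV \<alpha> \<longleftrightarrow> palais_proper H \<alpha>"
  proof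
    assume a: "palais_proper UNIV \<alpha>"
    show "palais_proper H \<alpha>" unfolding palais_proper_def
    proof
      fix x
      have "\<exists>Vx. open Vx \<and> x \<in> Vx \<and> (\<forall>x'. \<exists>Vx'. open Vx' \<and> x' \<in> Vx' \<and> perp UNIV \<alpha> Vx Vx')"
        using a unfolding palais_proper_def by (rule spec)
      then obtain Vx where Vx0: "open Vx \<and> x \<in> Vx \<and> (\<forall>x'. \<exists>Vx'. open Vx' \<and> x' \<in> Vx' \<and> perp UNIV \<alpha> Vx Vx')"
        by (rule exE)
      then have Vx: "open Vx" "x \<in> Vx" "\<forall>x'. \<exists>Vx'. open Vx' \<and> x' \<in> Vx' \<and> perp UNIV \<alpha> Vx Vx'"
        by (auto simp only:)
      have "\<exists>Vx'. open Vx' \<and> x' \<in> Vx' \<and> perp H \<alpha> Vx Vx'" for x'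
      proof -
        obtain V where "open V" "x' \<in> V" "perp UNIV \<alpha> Vx V" using Vx(3) by blast
        then show ?thesis using perp_UNIV_H[OF Hc] by (intro exI[of _ V]) simp
      qed
      then show "\<exists>Vx. open Vx \<and> x \<in> Vx \<and> (\<forall>x'. \<exists>Vx'. open Vx' \<and> x' \<in> Vx' \<and> perp H \<alpha> Vx Vx')"
        using Vx(1,2) by (intro exI[of _ Vx]) simp
    qed
  next
    assume p: "palais_proper H \<alpha>"
    show "palais_proper UNIV \<alpha>" unfolding palais_proper_def
    proof (intro allI)
      fix x
      have "\<exists>Vx. open Vx \<and> x \<in> Vx \<and> (\<forall>x'. \<exists>Vx'. open Vx' \<and> x' \<in> Vx' \<and> perp H \<alpha> Vx Vx')"
        using p unfolding palais_proper_def by (rule spec)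
      then obtain Vx where Vx0: "open Vx \<and> x \<in> Vx \<and> (\<forall>x'. \<exists>Vx'. open Vx' \<and> x' \<in> Vx' \<and> perp H \<alpha> Vx Vx')"
        by (rule exE)
      then have Vx: "open Vx" "x \<in> Vx" "\<forall>x'. \<exists>Vx'. open Vx' \<and> x' \<in> Vx' \<and> perp H \<alpha> Vx Vx'"
        by (auto simp only:)
      have "\<exists>Vx'. open Vx' \<and> x' \<in> Vx' \<and> perp UNIV \<alpha> Vx Vx'" for x'
      proof -
        have "\<forall>y. \<exists>V U. open V \<and> y \<in> V \<and> open U \<and> Vx \<subseteq> U \<and> perp H \<alpha> U V"
        proof
          fix y
          obtain V where "open V" "y \<in> V" "perp H \<alpha> Vx V" using Vx(3) by blast
          then show "\<exists>V U. open V \<and> y \<in> V \<and> open U \<and> Vx \<subseteq> U \<and> perp H \<alpha> U V"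
            using Vx(1) by (intro exI[of _ V] exI[of _ Vx]) simp
        qed
        from cr[OF this, of x'] obtain V U where VU: "open V" "x' \<in> V" "Vx \<subseteq> U" "perp UNIV \<alpha> U V"
          by blast
        have "perp UNIV \<alpha> Vx V" using perp_mono[OF closed_UNIV VU(4) VU(3) order_refl] .
        then show ?thesis using VU by (intro exI[of _ V]) simp
      qed
      then show "\<exists>Vx. open Vx \<and> x \<in> Vx \<and> (\<forall>x'. \<exists>Vx'. open Vx' \<and> x' \<in> Vx' \<and> perp UNIV \<alpha> Vx Vx')"
        using Vx(1,2) by (intro exI[of _ Vx]) simp
    qed
  qed
  show ?thesis using A B C by simp
qed

end
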